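(* Let $W$ be an irreducible euclidean Coxeter group not of type $\widetilde A_n$ and $\sigma$ a chamber of its Coxeter complex, with bipartite faces $F_0,F_1$, bipartite subspaces $B_0,B_1$ and closest points $x_0\in B_0$, $x_1\in B_1$. Then for $i=0,1$, the point $x_i$ lies in the (relative) interior of the face $F_i$. In particular, the bipartite line of $\sigma$ intersects the interior of $\sigma$.
   Context: $W$ acts on a euclidean space $E$, generated by reflections in the facets of a euclidean simplex with dihedral angles submultiples of $\pi$, properly and cocompactly; chambers are images of this simplex. The diagram $\Gamma$ (a tree here) has a unique bipartition, giving a partition $S_0\sqcup S_1$ of the reflections in the facets of $\sigma$; $F_j$ (bipartite face) is the face of $\sigma$ obtained by intersecting $\sigma$ with the hyperplanes of the reflections in $S_j$, and $B_j$ (bipartite subspace) is the affine hull of $F_j$. $B_0,B_1$ are disjoint and $x_0,x_1$ are the unique points realizing the minimal distance between them; the bipartite line is the line through $x_0$ and $x_1$. *)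

theory Defs
  imports "HOL-Analysis.Analysis" "HOL-Library.Extended_Nat"
begin

text \<open>A simplex in a euclidean space of dimension n = DIM('a) is described by its
  n+1 facets, indexed by 0..n: facet i lies in the hyperplane u i \<bullet> x = b i, with
  u i the outward unit normal, and the simplex is the intersection of the half-spaces
  u i \<bullet> x \<le> b i.\<close>

definition simplex_of :: "(nat \<Rightarrow> 'a::euclidean_space) \<Rightarrow> (nat \<Rightarrow> real) \<Rightarrow> 'a set" where
  "simplex_of u b = {x. \<forall>i\<le>DIM('a). u i \<bullet> x \<le> b i}"

definition wall :: "(nat \<Rightarrow> 'a::euclidean_space) \<Rightarrow> (nat \<Rightarrow> real) \<Rightarrow> nat \<Rightarrow> 'a set" where
  "wall u b i = {x. u i \<bullet> x = b i}"

text \<open>Interior dihedral angle between facets i and j (outward unit normals).\<close>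
definition dihedral_angle :: "(nat \<Rightarrow> 'a::euclidean_space) \<Rightarrow> nat \<Rightarrow> nat \<Rightarrow> real" where
  "dihedral_angle u i j = pi - arccos (u i \<bullet> u j)"

definition coxeter_simplex :: "(nat \<Rightarrow> 'a::euclidean_space) \<Rightarrow> (nat \<Rightarrow> real) \<Rightarrow> bool" where
  "coxeter_simplex u b \<longleftrightarrow>
     (\<forall>i\<le>DIM('a). norm (u i) = 1) \<and>
     bounded (simplex_of u b) \<and> interior (simplex_of u b) \<noteq> {} \<and>
     (\<forall>i\<le>DIM('a). \<forall>j\<le>DIM('a). i \<noteq> j \<longrightarrow>
        dihedral_angle u i j = 0 \<or> (\<exists>m::nat. m \<ge> 2 \<and> dihedral_angle u i j = pi / real m))"

definition coxeter_label :: "(nat \<Rightarrow> 'a::euclidean_space) \<Rightarrow> nat \<Rightarrow> nat \<Rightarrow> enat" where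
  "coxeter_label u i j =
     (if dihedral_angle u i j = 0 then \<infinity>
      else enat (THE m. m \<ge> 2 \<and> dihedral_angle u i j = pi / real m))"

definition diagram_edges :: "(nat \<Rightarrow> 'a::euclidean_space) \<Rightarrow> (nat \<times> nat) set" where
  "diagram_edges u = {(i, j). i \<le> DIM('a) \<and> j \<le> DIM('a) \<and> i \<noteq> j \<and> coxeter_label u i j \<ge> 3}"

definition irreducible_diagram :: "(nat \<Rightarrow> 'a::euclidean_space) \<Rightarrow> bool" where
  "irreducible_diagram u \<longleftrightarrow>
     (\<forall>i\<le>DIM('a). \<forall>j\<le>DIM('a). (i, j) \<in> (diagram_edges u)\<^sup>*)"

text \<open>Type affine A_n: for n = 1 two vertices joined by an \<infinity>-edge; for n \<ge> 2 an
  (n+1)-cycle with all labels 3 (all other labels 2).\<close>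
definition type_affine_A :: "(nat \<Rightarrow> 'a::euclidean_space) \<Rightarrow> bool" where
  "type_affine_A u \<longleftrightarrow>
     (DIM('a) = 1 \<and> coxeter_label u 0 1 = \<infinity>) \<or>
     (DIM('a) \<ge> 2 \<and> (\<exists>p. bij_betw p {0..DIM('a)} {0..DIM('a)} \<and>
        (\<forall>k\<le>DIM('a). \<forall>l\<le>DIM('a). k \<noteq> l \<longrightarrow>
           coxeter_label u (p k) (p l) =
             (if l = Suc k mod Suc DIM('a) \<or> k = Suc l mod Suc DIM('a) then 3 else 2))))"

definition diagram_bipartition :: "(nat \<Rightarrow> 'a::euclidean_space) \<Rightarrow> nat set \<Rightarrow> nat set \<Rightarrow> bool" where
  "diagram_bipartition u S0 S1 \<longleftrightarrow>
     S0 \<union> S1 = {0..DIM('a)} \<and> S0 \<inter> S1 = {} \<and>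
     (\<forall>i\<in>S0. \<forall>j\<in>S0. (i, j) \<notin> diagram_edges u) \<and>
     (\<forall>i\<in>S1. \<forall>j\<in>S1. (i, j) \<notin> diagram_edges u)"

definition bipartite_face :: "(nat \<Rightarrow> 'a::euclidean_space) \<Rightarrow> (nat \<Rightarrow> real) \<Rightarrow> nat set \<Rightarrow> 'a set" where
  "bipartite_face u b S = simplex_of u b \<inter> (\<Inter>i\<in>S. wall u b i)"

end

theory Submission
  imports Defs
begin

lemma foc:
  fixes v d :: "'a::real_inner"
  assumes "\<forall>t::real. norm v \<le> norm (v + t *\<^sub>R d)"
  shows "v \<bullet> d = 0"
proof -
  define a where "a = v \<bullet> d"
  define D where "D = d \<bullet> d"
  have D0: "D \<ge> 0" unfolding D_def by simp
  define t where "t = - a / (D + 1)"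
  have "norm v ^ 2 \<le> norm (v + t *\<^sub>R d) ^ 2"
    using assms by (simp add: power_mono)
  hence "v \<bullet> v \<le> (v + t *\<^sub>R d) \<bullet> (v + t *\<^sub>R d)"
    by (simp add: power2_norm_eq_inner)
  moreover have "(v + t *\<^sub>R d) \<bullet> (v + t *\<^sub>R d) = v \<bullet> v + 2 * t * a + t * t * D"
    unfolding a_def D_def by (simp add: inner_add_left inner_add_right inner_commute[of d v] algebra_simps)
  ultimately have "0 \<le> 2 * t * a + t * t * D" by linarith
  hence "0 \<le> (D+1)*(D+1) * (2 * t * a + t * t * D)"
    using D0 by simp
  also have "(D+1)*(D+1) * (2 * t * a + t * t * D) = a * a * (- D - 2)"
  proof -
    have tt: "t * (D+1) = - a" using D0 unfolding t_def by simp
    have "(D+1)*(D+1) * (2 * t * a + t * t * D) = 2 * a * (D+1) * (t * (D+1)) + (t * (D+1)) * (t * (D+1)) * D"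
      by (simp add: algebra_simps)
    also have "\<dots> = a * a * (- D - 2)" unfolding tt by (simp add: algebra_simps)
    finally show ?thesis .
  qed
  finally have "0 \<le> a * a * (- D - 2)" .
  moreover have "a * a * (- D - 2) = - (a * a * (D + 2))" by (simp add: algebra_simps)
  ultimately have le: "a * a * (D + 2) \<le> 0" by linarith
  have "0 \<le> a * a * (D + 2)" using D0 by simp
  hence "a * a * (D + 2) = 0" using le by linarith
  hence "a * a = 0" using D0 by simp
  thus ?thesis unfolding a_def by simp
qed

lemma span_indexed:
  fixes u :: "nat \<Rightarrow> 'a::real_vector"
  assumes "finite S" "v \<in> span (u ` S)"
  shows "\<exists>\<alpha>. v = (\<Sum>i\<in>S. \<alpha> i *\<^sub>R u i)"
proof -
  let ?V = "range (\<lambda>\<alpha>. \<Sum>i\<in>S. \<alpha> i *\<^sub>R u i)"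
  have "subspace ?V"
    unfolding subspace_def
  proof safe
    show "0 \<in> ?V" by (rule range_eqI[of _ _ "\<lambda>_. 0"]) simp
  next
    fix \<alpha> \<beta> show "(\<Sum>i\<in>S. \<alpha> i *\<^sub>R u i) + (\<Sum>i\<in>S. \<beta> i *\<^sub>R u i) \<in> ?V"
      by (rule range_eqI[of _ _ "\<lambda>i. \<alpha> i + \<beta> i"]) (simp add: sum.distrib scaleR_add_left)
  next
    fix c :: real and \<alpha> show "c *\<^sub>R (\<Sum>i\<in>S. \<alpha> i *\<^sub>R u i) \<in> ?V"
      by (rule range_eqI[of _ _ "\<lambda>i. c * \<alpha> i"]) (simp add: scaleR_sum_right)
  qed
  moreover have "u ` S \<subseteq> ?V"
  proof
    fix x assume "x \<in> u ` S" then obtain j where j: "j \<in> S" "x = u j" by auto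
    show "x \<in> ?V"
    proof (rule range_eqI[of _ _ "\<lambda>i. if i = j then 1 else 0"])
      have "(\<Sum>i\<in>S. (if i = j then 1 else 0) *\<^sub>R u i) = (\<Sum>i\<in>S. if i = j then u i else 0)"
        by (rule sum.cong) auto
      also have "\<dots> = u j" using j(1) assms(1) by simp
      finally show "x = (\<Sum>i\<in>S. (if i = j then 1 else 0) *\<^sub>R u i)" using j by simp
    qed
  qed
  ultimately have "span (u ` S) \<subseteq> ?V" by (rule span_minimal[rotated])
  thus ?thesis using assms(2) by auto
qed

lemma orth_span:
  fixes v :: "'a::euclidean_space"
  assumes "\<forall>d. (\<forall>i\<in>S. u i \<bullet> d = 0) \<longrightarrow> v \<bullet> d = 0"
  shows "v \<in> span (u ` S)"
proof -
  obtain y z where y: "y \<in> span (u ` S)" and z: "\<And>w. w \<in> span (u ` S) \<Longrightarrow> orthogonal z w"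
    and v: "v = y + z"
    using orthogonal_subspace_decomp_exists[of "u ` S" v] by blast
  have "\<forall>i\<in>S. u i \<bullet> z = 0"
  proof
    fix i assume "i \<in> S"
    hence "u i \<in> span (u ` S)" by (intro span_base) simp
    hence "orthogonal z (u i)" by (rule z)
    thus "u i \<bullet> z = 0" by (simp add: orthogonal_def inner_commute[of "u i" z])
  qed
  hence "v \<bullet> z = 0" using assms by blast
  moreover have "y \<bullet> z = 0" using z[OF y] by (simp add: orthogonal_def inner_commute[of y z])
  ultimately have "z \<bullet> z = 0" by (simp add: v inner_add_left)
  thus ?thesis using v y by simp
qed

lemma zero_orth_span:
  fixes z :: "'a::euclidean_space"
  assumes "span (u ` M) = UNIV" "\<forall>k\<in>M. u k \<bullet> z = 0"
  shows "z = 0"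
proof -
  have "orthogonal z z"
    by (rule orthogonal_to_span[of z "u ` M"]) (use assms in \<open>auto simp: orthogonal_def inner_commute[of z]\<close>)
  thus ?thesis by (simp add: orthogonal_def)
qed

context
  fixes u :: "nat \<Rightarrow> 'a::euclidean_space" and b :: "nat \<Rightarrow> real"
  assumes bnd: "bounded (simplex_of u b)" and nonemp: "simplex_of u b \<noteq> {}"
begin

lemma ray_False:
  assumes p: "p \<in> simplex_of u b" and w: "w \<noteq> 0" and neg: "\<forall>k\<le>DIM('a). u k \<bullet> w \<le> 0"
  shows False
proof -
  obtain B where B: "\<forall>x\<in>simplex_of u b. norm x \<le> B" using bnd bounded_iff by blast
  have ray: "p + t *\<^sub>R w \<in> simplex_of u b" if "t \<ge> 0" for t
  proof -
    have "\<forall>k\<le>DIM('a). u k \<bullet> (p + t *\<^sub>R w) \<le> b k"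
    proof (intro allI impI)
      fix k assume k: "k \<le> DIM('a)"
      have "u k \<bullet> p \<le> b k" using p k by (simp add: simplex_of_def)
      moreover have "t * (u k \<bullet> w) \<le> 0" using neg k that by (simp add: mult_nonneg_nonpos)
      ultimately show "u k \<bullet> (p + t *\<^sub>R w) \<le> b k" by (simp add: inner_add_right)
    qed
    thus ?thesis by (simp add: simplex_of_def)
  qed
  define t where "t = (B + norm p + 1) / norm w"
  have nw: "norm w > 0" using w by simp
  have "B \<ge> 0" using B p by (meson norm_ge_zero order_trans)
  hence t0: "t \<ge> 0" unfolding t_def using nw by simp
  have "norm (t *\<^sub>R w) = B + norm p + 1" unfolding t_def using nw \<open>B \<ge> 0\<close> by simp
  moreover have "norm (t *\<^sub>R w) \<le> norm (p + t *\<^sub>R w) + norm p"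
    by (metis add.commute add_diff_cancel_left' norm_triangle_ineq4)
  moreover have "norm (p + t *\<^sub>R w) \<le> B" using B ray[OF t0] by blast
  ultimately show False by linarith
qed

lemma span_minus:
  assumes j: "j \<le> DIM('a)"
  shows "span (u ` ({..DIM('a)} - {j})) = UNIV"
proof (rule ccontr)
  assume "span (u ` ({..DIM('a)} - {j})) \<noteq> UNIV"
  then obtain w where w: "w \<noteq> 0" "\<forall>x\<in>span (u ` ({..DIM('a)} - {j})). w \<bullet> x = 0"
    using span_not_UNIV_orthogonal by blast
  have o: "u k \<bullet> w = 0" if "k \<le> DIM('a)" "k \<noteq> j" for k
    using w(2) that span_base[of "u k" "u ` ({..DIM('a)} - {j})"] by (auto simp: inner_commute[of w])
  obtain p where p: "p \<in> simplex_of u b" using nonemp by blast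
  show False
  proof (cases "u j \<bullet> w \<le> 0")
    case True
    show False by (rule ray_False[OF p w(1)]) (use o True in \<open>metis order_refl\<close>)
  next
    case False
    have "\<forall>k\<le>DIM('a). u k \<bullet> (- w) \<le> 0"
    proof (intro allI impI)
      fix k assume "k \<le> DIM('a)"
      then show "u k \<bullet> (- w) \<le> 0" using o[of k] False by (cases "k = j") auto
    qed
    then show False using ray_False[OF p, of "- w"] w(1) by simp
  qed
qed

lemma solver:
  assumes j: "j \<le> DIM('a)"
  shows "\<exists>x. \<forall>k\<in>{..DIM('a)} - {j}. u k \<bullet> x = t k"
proof -
  define M where "M = {..DIM('a)} - {j}"
  have fM: "finite M" unfolding M_def by simp
  have cM: "card M = card (Basis :: 'a set)" unfolding M_def using j by simp
  obtain g where g: "bij_betw g M (Basis :: 'a set)"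
    using finite_same_card_bij[OF fM _ cM] by auto
  have key: "(\<Sum>k\<in>M. a k *\<^sub>R g k) \<bullet> g m = a m" if m: "m \<in> M" for a m
  proof -
    have "(\<Sum>k\<in>M. a k *\<^sub>R g k) \<bullet> g m = (\<Sum>k\<in>M. a k * (g k \<bullet> g m))"
      by (simp add: inner_sum_left)
    also have "\<dots> = (\<Sum>k\<in>M. if k = m then a k else 0)"
    proof (rule sum.cong)
      fix k assume k: "k \<in> M"
      have gk: "g k \<in> Basis" "g m \<in> Basis" using g k m by (auto simp: bij_betw_def)
      have "g k = g m \<longleftrightarrow> k = m" using g k m by (auto simp: bij_betw_def inj_on_def)
      thus "a k * (g k \<bullet> g m) = (if k = m then a k else 0)" using gk by (simp add: inner_Basis)
    qed simp
    also have "\<dots> = a m" using m fM by simp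
    finally show ?thesis .
  qed
  define f where "f x = (\<Sum>k\<in>M. (u k \<bullet> x) *\<^sub>R g k)" for x
  have lin: "linear f"
  proof (rule linearI)
    fix x y show "f (x + y) = f x + f y"
      unfolding f_def inner_add_right scaleR_add_left by (rule sum.distrib)
  next
    fix r :: real and x show "f (r *\<^sub>R x) = r *\<^sub>R f x"
      unfolding f_def scaleR_sum_right by (simp add: algebra_simps)
  qed
  have "inj f"
  proof (rule injI)
    fix x y assume "f x = f y"
    have "\<forall>k\<in>M. u k \<bullet> (x - y) = 0"
    proof
      fix k assume k: "k \<in> M"
      have "u k \<bullet> x = f x \<bullet> g k" using key[OF k, of "\<lambda>k. u k \<bullet> x"] by (simp add: f_def)
      also have "\<dots> = f y \<bullet> g k" using \<open>f x = f y\<close> by simp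
      also have "\<dots> = u k \<bullet> y" using key[OF k, of "\<lambda>k. u k \<bullet> y"] by (simp add: f_def)
      finally show "u k \<bullet> (x - y) = 0" by (simp add: inner_diff_right)
    qed
    hence "\<forall>k\<in>{..DIM('a)} - {j}. u k \<bullet> (x - y) = 0" unfolding M_def .
    hence "x - y = 0" by (rule zero_orth_span[OF span_minus[OF j]])
    thus "x = y" by simp
  qed
  hence "surj f" by (rule linear_inj_imp_surj[OF lin])
  then obtain x where x: "f x = (\<Sum>k\<in>M. t k *\<^sub>R g k)" by (metis surj_def)
  have "\<forall>k\<in>M. u k \<bullet> x = t k"
  proof
    fix k assume k: "k \<in> M"
    have "u k \<bullet> x = f x \<bullet> g k" using key[OF k, of "\<lambda>k. u k \<bullet> x"] by (simp add: f_def)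
    also have "\<dots> = t k" using x key[OF k, of t] by simp
    finally show "u k \<bullet> x = t k" .
  qed
  thus ?thesis unfolding M_def by (rule exI)
qed

end

context
  fixes u :: "nat \<Rightarrow> 'a::euclidean_space" and b :: "nat \<Rightarrow> real"
  assumes bnd: "bounded (simplex_of u b)" and nonemp: "simplex_of u b \<noteq> {}"
begin

lemma evalw:
  assumes e: "(\<Sum>k\<le>DIM('a). e k *\<^sub>R u k) = 0" and jm: "j \<le> DIM('a)" "m \<le> DIM('a)" "m \<noteq> j"
    and w: "\<forall>k\<in>{..DIM('a)} - {j}. u k \<bullet> w = (if k = m then s else 0)"
  shows "e j * (u j \<bullet> w) + e m * s = 0"
proof -
  have "0 = (\<Sum>k\<le>DIM('a). e k *\<^sub>R u k) \<bullet> w" using e by simp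
  also have "\<dots> = (\<Sum>k\<le>DIM('a). e k * (u k \<bullet> w))" by (simp add: inner_sum_left)
  also have "\<dots> = (\<Sum>k\<le>DIM('a). (if k = j then e j * (u j \<bullet> w) else 0) + (if k = m then e m * s else 0))"
    by (rule sum.cong) (use w jm in auto)
  also have "\<dots> = e j * (u j \<bullet> w) + e m * s"
    using jm by (simp add: sum.distrib)
  finally show ?thesis by simp
qed

lemma dot_trick:
  assumes e: "(\<Sum>k\<le>DIM('a). e k *\<^sub>R u k) = 0" and ej: "e j = 0" and jm: "j \<le> DIM('a)" "m \<le> DIM('a)"
  shows "e m = 0"
proof (cases "m = j")
  case True thus ?thesis using ej by simp
next
  case False
  obtain w where w: "\<forall>k\<in>{..DIM('a)} - {j}. u k \<bullet> w = (if k = m then 1 else 0)"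
    using solver[OF bnd nonemp jm(1), where t="\<lambda>k. if k = m then 1 else 0"] by blast
  show ?thesis using evalw[OF e jm False w] ej by simp
qed

lemma pos_dep: "\<exists>c. (\<forall>k\<le>DIM('a). c k > 0) \<and> (\<Sum>k\<le>DIM('a). c k *\<^sub>R u k) = 0"
proof -
  have "u 0 \<in> span (u ` ({..DIM('a)} - {0}))" using span_minus[OF bnd nonemp, of 0] by simp
  then obtain d where d: "u 0 = (\<Sum>k\<in>{..DIM('a)} - {0}. d k *\<^sub>R u k)"
    using span_indexed[of "{..DIM('a)} - {0}" "u 0" u] by auto
  define c where "c k = (if k = 0 then 1 else - d k)" for k
  have "(\<Sum>k\<le>DIM('a). c k *\<^sub>R u k) = c 0 *\<^sub>R u 0 + (\<Sum>k\<in>{..DIM('a)} - {0}. c k *\<^sub>R u k)"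
    by (simp add: sum.remove[of "{..DIM('a)}" 0])
  also have "(\<Sum>k\<in>{..DIM('a)} - {0}. c k *\<^sub>R u k) = - (\<Sum>k\<in>{..DIM('a)} - {0}. d k *\<^sub>R u k)"
  proof -
    have "(\<Sum>k\<in>{..DIM('a)} - {0}. c k *\<^sub>R u k) = (\<Sum>k\<in>{..DIM('a)} - {0}. - (d k *\<^sub>R u k))"
      by (rule sum.cong) (auto simp: c_def)
    also have "\<dots> = - (\<Sum>k\<in>{..DIM('a)} - {0}. d k *\<^sub>R u k)" by (rule sum_negf)
    finally show ?thesis .
  qed
  finally have c: "(\<Sum>k\<le>DIM('a). c k *\<^sub>R u k) = 0" using d by (simp add: c_def)
  have "c m > 0" if m: "m \<le> DIM('a)" for m
  proof (cases "m = 0")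
    case True thus ?thesis by (simp add: c_def)
  next
    case False
    obtain w where w: "\<forall>k\<in>{..DIM('a)} - {0}. u k \<bullet> w = (if k = m then -1 else 0)"
      using solver[OF bnd nonemp, of 0 "\<lambda>k. if k = m then -1 else 0"] by auto
    have "c 0 * (u 0 \<bullet> w) + c m * (-1) = 0" using evalw[OF c _ m False w] by simp
    hence u0: "u 0 \<bullet> w = c m" by (simp add: c_def)
    show ?thesis
    proof (rule ccontr)
      assume "\<not> c m > 0"
      have neg: "\<forall>k\<le>DIM('a). u k \<bullet> w \<le> 0"
      proof (intro allI impI)
        fix k assume k: "k \<le> DIM('a)"
        show "u k \<bullet> w \<le> 0"
        proof (cases "k = 0")
          case True thus ?thesis using u0 \<open>\<not> c m > 0\<close> by simp
        next
          case False
          hence "u k \<bullet> w = (if k = m then -1 else 0)" using w k by simp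
          thus ?thesis by simp
        qed
      qed
      have "w \<noteq> 0" using w m False by force
      obtain p where "p \<in> simplex_of u b" using nonemp by blast
      thus False using ray_False[OF bnd nonemp] neg \<open>w \<noteq> 0\<close> by blast
    qed
  qed
  thus ?thesis using c by blast
qed

lemma kernel:
  assumes cpos: "\<forall>k\<le>DIM('a). c k > 0" and c: "(\<Sum>k\<le>DIM('a). c k *\<^sub>R u k) = 0"
    and d: "(\<Sum>k\<le>DIM('a). d k *\<^sub>R u k) = 0"
  shows "\<exists>l. \<forall>k\<le>DIM('a). d k = l * c k"
proof -
  define l where "l = d 0 / c 0"
  define e where "e k = d k - l * c k" for k
  have "(\<Sum>k\<le>DIM('a). e k *\<^sub>R u k) = (\<Sum>k\<le>DIM('a). d k *\<^sub>R u k) - l *\<^sub>R (\<Sum>k\<le>DIM('a). c k *\<^sub>R u k)"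
    by (simp add: e_def scaleR_diff_left sum_subtractf scaleR_sum_right)
  hence e: "(\<Sum>k\<le>DIM('a). e k *\<^sub>R u k) = 0" using c d by simp
  have "e 0 = 0" using cpos[rule_format, of 0] by (simp add: e_def l_def)
  hence "\<forall>k\<le>DIM('a). e k = 0" using dot_trick[OF e] by blast
  thus ?thesis unfolding e_def by auto
qed

end

lemma aff_sub:
  "affine hull (bipartite_face u b S) \<subseteq> {x. \<forall>i\<in>S. u i \<bullet> x = b i}"
proof (rule hull_minimal)
  show "bipartite_face u b S \<subseteq> {x. \<forall>i\<in>S. u i \<bullet> x = b i}"
    by (auto simp: bipartite_face_def wall_def)
  show "affine {x. \<forall>i\<in>S. u i \<bullet> x = b i}"
    unfolding affine_def
  proof (intro ballI allI impI)
    fix x y :: 'a and s t :: real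
    assume x: "x \<in> {x. \<forall>i\<in>S. u i \<bullet> x = b i}" and y: "y \<in> {x. \<forall>i\<in>S. u i \<bullet> x = b i}" and st: "s + t = 1"
    show "s *\<^sub>R x + t *\<^sub>R y \<in> {x. \<forall>i\<in>S. u i \<bullet> x = b i}"
    proof (safe)
      fix i assume "i \<in> S"
      hence "u i \<bullet> (s *\<^sub>R x + t *\<^sub>R y) = s * b i + t * b i" using x y by (simp add: inner_add_right)
      also have "\<dots> = b i" using st by (metis distrib_right mult_1)
      finally show "u i \<bullet> (s *\<^sub>R x + t *\<^sub>R y) = b i" .
    qed
  qed
qed

lemma identity:
  assumes c: "(\<Sum>k\<le>DIM('a). c k *\<^sub>R u k) = (0::'a::euclidean_space)"
  shows "(\<Sum>k\<le>DIM('a). c k * (b k - u k \<bullet> x)) = (\<Sum>k\<le>DIM('a). c k * b k)"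
proof -
  have "(\<Sum>k\<le>DIM('a). c k * (u k \<bullet> x)) = (\<Sum>k\<le>DIM('a). c k *\<^sub>R u k) \<bullet> x"
    by (simp add: inner_sum_left)
  thus ?thesis using c by (simp add: right_diff_distrib sum_subtractf)
qed

lemma relint:
  fixes u :: "nat \<Rightarrow> 'a::euclidean_space"
  assumes ST: "S \<union> T = {..DIM('a)}" and x: "\<forall>i\<in>S. u i \<bullet> x = b i" and xT: "\<forall>j\<in>T. u j \<bullet> x < b j"
  shows "x \<in> rel_interior (bipartite_face u b S)"
  unfolding mem_rel_interior
proof (intro exI conjI)
  let ?O = "\<Inter>j\<in>T. {y. u j \<bullet> y < b j}"
  have fT: "finite T" using ST by (metis finite_Un finite_atMost)
  show "open ?O" using fT by (intro open_INT) (auto intro: open_halfspace_lt)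
  have mem: "y \<in> bipartite_face u b S" if "\<forall>i\<in>S. u i \<bullet> y = b i" "\<forall>j\<in>T. u j \<bullet> y < b j" for y
  proof -
    have "\<forall>k\<le>DIM('a). u k \<bullet> y \<le> b k"
    proof (intro allI impI)
      fix k assume "k \<le> DIM('a)"
      hence "k \<in> S \<or> k \<in> T" using ST by auto
      thus "u k \<bullet> y \<le> b k" using that by (auto intro: less_imp_le)
    qed
    thus ?thesis using that(1) by (auto simp: bipartite_face_def simplex_of_def wall_def)
  qed
  show "x \<in> ?O \<inter> bipartite_face u b S" using mem[OF x xT] xT by auto
  show "?O \<inter> affine hull bipartite_face u b S \<subseteq> bipartite_face u b S"
  proof
    fix y assume y: "y \<in> ?O \<inter> affine hull bipartite_face u b S"
    hence "\<forall>i\<in>S. u i \<bullet> y = b i" using aff_sub[of u b S] by auto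
    moreover have "\<forall>j\<in>T. u j \<bullet> y < b j" using y by auto
    ultimately show "y \<in> bipartite_face u b S" by (rule mem)
  qed
qed

lemma Cpos:
  fixes u :: "nat \<Rightarrow> 'a::euclidean_space"
  assumes int: "interior (simplex_of u b) \<noteq> {}" and u0: "u 0 \<noteq> 0"
    and cpos: "\<forall>k\<le>DIM('a). c k > 0" and c: "(\<Sum>k\<le>DIM('a). c k *\<^sub>R u k) = 0"
  shows "(\<Sum>k\<le>DIM('a). c k * b k) > 0"
proof -
  obtain p where p: "p \<in> interior (simplex_of u b)" using int by blast
  then obtain e where e: "e > 0" "ball p e \<subseteq> simplex_of u b" using mem_interior by blast
  define q where "q = p + (e / 2 / norm (u 0)) *\<^sub>R u 0"
  have "dist p q < e" using e u0 by (simp add: q_def dist_norm)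
  hence "q \<in> simplex_of u b" using e by auto
  hence "u 0 \<bullet> q \<le> b 0" by (simp add: simplex_of_def)
  moreover have "u 0 \<bullet> q = u 0 \<bullet> p + e / 2 * norm (u 0)"
    using u0 by (simp add: q_def inner_add_right power2_norm_eq_inner[symmetric] power2_eq_square)
  moreover have "e / 2 * norm (u 0) > 0" using e u0 by simp
  ultimately have p0: "b 0 - u 0 \<bullet> p > 0" by linarith
  have ps: "\<forall>k\<le>DIM('a). b k - u k \<bullet> p \<ge> 0"
    using p interior_subset[of "simplex_of u b"] by (auto simp: simplex_of_def)
  have "(\<Sum>k\<le>DIM('a). c k * b k) = (\<Sum>k\<le>DIM('a). c k * (b k - u k \<bullet> p))"
    using identity[OF c] by simp
  also have "\<dots> = c 0 * (b 0 - u 0 \<bullet> p) + (\<Sum>k\<in>{..DIM('a)} - {0}. c k * (b k - u k \<bullet> p))"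
    by (simp add: sum.remove[of "{..DIM('a)}" 0])
  also have "\<dots> > 0"
  proof -
    have "c 0 * (b 0 - u 0 \<bullet> p) > 0" using cpos p0 by simp
    moreover have "(\<Sum>k\<in>{..DIM('a)} - {0}. c k * (b k - u k \<bullet> p)) \<ge> 0"
      using cpos ps by (intro sum_nonneg) (simp add: less_imp_le)
    ultimately show ?thesis by linarith
  qed
  finally show ?thesis .
qed

lemma W_sub_aff:
  fixes u :: "nat \<Rightarrow> 'a::euclidean_space"
  assumes bnd: "bounded (simplex_of u b)" and nonemp: "simplex_of u b \<noteq> {}"
    and cpos: "\<forall>k\<le>DIM('a). c k > 0" and c: "(\<Sum>k\<le>DIM('a). c k *\<^sub>R u k) = 0"
    and C: "(\<Sum>k\<le>DIM('a). c k * b k) > 0"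
    and ST: "S \<union> T = {..DIM('a)}" "S \<inter> T = {}" and Tne: "T \<noteq> {}"
  shows "{x. \<forall>i\<in>S. u i \<bullet> x = b i} \<subseteq> affine hull (bipartite_face u b S)"
proof
  fix x assume x: "x \<in> {x. \<forall>i\<in>S. u i \<bullet> x = b i}"
  obtain j0 where j0: "j0 \<in> T" using Tne by blast
  have j0n: "j0 \<le> DIM('a)" using j0 ST by auto
  have fT: "finite T" using ST by (metis finite_Un finite_atMost)
  define s where "s = (\<Sum>k\<le>DIM('a). c k * b k) / (\<Sum>k\<in>T. c k)"
  have cT: "(\<Sum>k\<in>T. c k) > 0"
    using cpos ST fT Tne by (intro sum_pos) auto
  have s0: "s > 0" using C cT by (simp add: s_def)
  obtain y where y: "\<forall>k\<in>{..DIM('a)} - {j0}. u k \<bullet> y = (if k \<in> S then b k else b k - s)"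
    using solver[OF bnd nonemp j0n, where t="\<lambda>k. if k \<in> S then b k else b k - s"] by blast
  have phi: "b k - u k \<bullet> y = (if k \<in> S then 0 else s)" if "k \<le> DIM('a)" for k
  proof (cases "k = j0")
    case False thus ?thesis using y that by auto
  next
    case True
    have sumid: "(\<Sum>k\<le>DIM('a). c k * (b k - u k \<bullet> y)) = (\<Sum>k\<le>DIM('a). c k * b k)"
      by (rule identity[OF c])
    have "(\<Sum>k\<le>DIM('a). c k * (b k - u k \<bullet> y))
        = c j0 * (b j0 - u j0 \<bullet> y) + (\<Sum>k\<in>{..DIM('a)} - {j0}. c k * (b k - u k \<bullet> y))"
      using j0n by (simp add: sum.remove[of "{..DIM('a)}" j0])
    also have "(\<Sum>k\<in>{..DIM('a)} - {j0}. c k * (b k - u k \<bullet> y)) = (\<Sum>k\<in>T - {j0}. c k * s)"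
    proof -
      have "(\<Sum>k\<in>{..DIM('a)} - {j0}. c k * (b k - u k \<bullet> y))
          = (\<Sum>k\<in>{..DIM('a)} - {j0}. if k \<in> T - {j0} then c k * s else 0)"
        by (rule sum.cong) (use y ST in auto)
      also have "\<dots> = (\<Sum>k\<in>T - {j0}. c k * s)"
      proof -
        have eq: "({..DIM('a)} - {j0}) \<inter> T = T - {j0}" using ST by auto
        show ?thesis using eq by (simp add: sum.If_cases)
      qed
      finally show ?thesis .
    qed
    also have "(\<Sum>k\<in>T - {j0}. c k * s) = s * (\<Sum>k\<in>T. c k) - c j0 * s"
      using fT j0 by (simp add: sum.remove[of T j0] sum_distrib_left algebra_simps)
    also have "s * (\<Sum>k\<in>T. c k) = (\<Sum>k\<le>DIM('a). c k * b k)" using cT by (simp add: s_def)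
    finally have "c j0 * (b j0 - u j0 \<bullet> y) = c j0 * s" using sumid by linarith
    moreover have "c j0 > 0" using cpos j0n by simp
    ultimately have "b j0 - u j0 \<bullet> y = s" by simp
    thus ?thesis using True j0 ST by auto
  qed
  have yF: "y \<in> bipartite_face u b S"
  proof -
    have "u k \<bullet> y \<le> b k" if "k \<le> DIM('a)" for k
      using phi[OF that] s0 by (cases "k \<in> S") auto
    moreover have "u i \<bullet> y = b i" if "i \<in> S" for i
    proof -
      have "i \<in> {..DIM('a)}" using that ST by blast
      thus ?thesis using phi[of i] that by simp
    qed
    ultimately show ?thesis by (auto simp: bipartite_face_def simplex_of_def wall_def)
  qed
  define d where "d = x - y"
  define ep where "ep = s / (1 + (\<Sum>k\<le>DIM('a). \<bar>u k \<bullet> d\<bar>))"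
  have den: "1 + (\<Sum>k\<le>DIM('a). \<bar>u k \<bullet> d\<bar>) > 0"
  proof -
    have "(\<Sum>k\<le>DIM('a). \<bar>u k \<bullet> d\<bar>) \<ge> 0" by (intro sum_nonneg) auto
    thus ?thesis by linarith
  qed
  have ep0: "ep > 0" using s0 den by (simp add: ep_def)
  have epb: "ep * \<bar>u k \<bullet> d\<bar> < s" if "k \<le> DIM('a)" for k
  proof -
    have "\<bar>u k \<bullet> d\<bar> \<le> (\<Sum>k\<le>DIM('a). \<bar>u k \<bullet> d\<bar>)"
      using that by (intro member_le_sum) auto
    hence "\<bar>u k \<bullet> d\<bar> < 1 + (\<Sum>k\<le>DIM('a). \<bar>u k \<bullet> d\<bar>)" by linarith
    hence "ep * \<bar>u k \<bullet> d\<bar> < ep * (1 + (\<Sum>k\<le>DIM('a). \<bar>u k \<bullet> d\<bar>))" using ep0 by simp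
    also have "\<dots> = s" using den by (simp add: ep_def)
    finally show ?thesis .
  qed
  define z where "z = y + ep *\<^sub>R d"
  have zF: "z \<in> bipartite_face u b S"
  proof -
    have zS: "u i \<bullet> z = b i" if "i \<in> S" for i
    proof -
      have "i \<in> {..DIM('a)}" using that ST by blast
      hence "u i \<bullet> y = b i" "u i \<bullet> x = b i" using phi[of i] that x by auto
      thus ?thesis by (simp add: z_def d_def inner_add_right inner_diff_right)
    qed
    have "u k \<bullet> z \<le> b k" if k: "k \<le> DIM('a)" for k
    proof (cases "k \<in> S")
      case True thus ?thesis using zS by simp
    next
      case False
      hence "b k - u k \<bullet> y = s" using phi[OF k] by simp
      moreover have "ep * (u k \<bullet> d) \<le> ep * \<bar>u k \<bullet> d\<bar>" using ep0 by (intro mult_left_mono) auto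
      moreover have "u k \<bullet> z = u k \<bullet> y + ep * (u k \<bullet> d)" by (simp add: z_def inner_add_right)
      ultimately show ?thesis using epb[OF k] by linarith
    qed
    thus ?thesis using zS by (auto simp: bipartite_face_def simplex_of_def wall_def)
  qed
  have "(1/ep) *\<^sub>R (z - y) = d" using ep0 by (simp add: z_def)
  have comb: "(1 - 1/ep) *\<^sub>R y + (1/ep) *\<^sub>R z = y + (1/ep) *\<^sub>R (z - y)"
    by (simp add: scaleR_diff_left scaleR_diff_right)
  have xe: "x = (1 - 1/ep) *\<^sub>R y + (1/ep) *\<^sub>R z"
    unfolding comb using \<open>(1/ep) *\<^sub>R (z - y) = d\<close> by (simp add: d_def)
  have yin: "y \<in> affine hull (bipartite_face u b S)" using yF by (rule hull_inc)
  have zin: "z \<in> affine hull (bipartite_face u b S)" using zF by (rule hull_inc)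
  show "x \<in> affine hull (bipartite_face u b S)"
    unfolding xe by (rule mem_affine[OF affine_affine_hull yin zin]) simp
qed

lemma orth_cox:
  fixes u :: "nat \<Rightarrow> 'a::euclidean_space"
  assumes cs: "coxeter_simplex u b" and ne: "(i, j) \<notin> diagram_edges u"
    and ij: "i \<le> DIM('a)" "j \<le> DIM('a)" "i \<noteq> j"
  shows "u i \<bullet> u j = 0"
proof -
  have nl: "\<not> coxeter_label u i j \<ge> 3" using ne ij by (auto simp: diagram_edges_def)
  have n1: "norm (u i) = 1" "norm (u j) = 1" using cs ij by (auto simp: coxeter_simplex_def)
  have ang: "dihedral_angle u i j = 0 \<or> (\<exists>m::nat. m \<ge> 2 \<and> dihedral_angle u i j = pi / real m)"
    using cs ij by (auto simp: coxeter_simplex_def)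
  have "dihedral_angle u i j \<noteq> 0"
  proof
    assume "dihedral_angle u i j = 0"
    hence "coxeter_label u i j = \<infinity>" by (simp add: coxeter_label_def)
    thus False using nl by simp
  qed
  with ang obtain m :: nat where m: "m \<ge> 2" "dihedral_angle u i j = pi / real m" by blast
  have the: "(THE m'. m' \<ge> 2 \<and> dihedral_angle u i j = pi / real m') = m"
  proof (rule the_equality)
    show "m \<ge> 2 \<and> dihedral_angle u i j = pi / real m" using m by simp
  next
    fix m' :: nat assume "m' \<ge> 2 \<and> dihedral_angle u i j = pi / real m'"
    hence "pi / real m' = pi / real m" "m' \<ge> 2" using m by auto
    hence "real m' = real m" using m pi_gt_zero by (simp add: divide_cancel_left)
    thus "m' = m" by simp
  qed
  have "coxeter_label u i j = enat m"
    using \<open>dihedral_angle u i j \<noteq> 0\<close> the by (simp add: coxeter_label_def)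
  hence "m < 3" using nl by (simp add: not_le)
  hence m2: "m = 2" using m by simp
  have "pi - arccos (u i \<bullet> u j) = pi / 2" using m(2) m2 by (simp add: dihedral_angle_def)
  hence ac: "arccos (u i \<bullet> u j) = pi / 2" by simp
  have "\<bar>u i \<bullet> u j\<bar> \<le> 1" using Cauchy_Schwarz_ineq2[of "u i" "u j"] n1 by simp
  hence "cos (arccos (u i \<bullet> u j)) = u i \<bullet> u j" by (intro cos_arccos) auto
  thus ?thesis using ac by simp
qed

theorem lemma8p5:
  fixes u :: "nat \<Rightarrow> 'a::euclidean_space" and b :: "nat \<Rightarrow> real"
    and S0 S1 :: "nat set" and x0 x1 :: 'a
  assumes "coxeter_simplex u b"
    and "irreducible_diagram u"
    and "\<not> type_affine_A u"
    and "diagram_bipartition u S0 S1"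
    and "x0 \<in> affine hull (bipartite_face u b S0)"
    and "x1 \<in> affine hull (bipartite_face u b S1)"
    and "\<forall>y0\<in>affine hull (bipartite_face u b S0). \<forall>y1\<in>affine hull (bipartite_face u b S1).
           dist x0 x1 \<le> dist y0 y1"
  shows "x0 \<in> rel_interior (bipartite_face u b S0)
       \<and> x1 \<in> rel_interior (bipartite_face u b S1)
       \<and> (\<exists>t::real. x0 + t *\<^sub>R (x1 - x0) \<in> interior (simplex_of u b))"
proof -
  note cs = assms(1)
  have unit: "\<forall>k\<le>DIM('a). norm (u k) = 1" and bnd: "bounded (simplex_of u b)"
    and int: "interior (simplex_of u b) \<noteq> {}"
    using cs by (auto simp: coxeter_simplex_def)
  have nonemp: "simplex_of u b \<noteq> {}" using int interior_subset by blast
  obtain c where cpos: "\<forall>k\<le>DIM('a). c k > 0" and c: "(\<Sum>k\<le>DIM('a). c k *\<^sub>R u k) = 0"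
    using pos_dep[OF bnd nonemp] by blast
  have u0: "u 0 \<noteq> 0" using unit by auto
  have C: "(\<Sum>k\<le>DIM('a). c k * b k) > 0" by (rule Cpos[OF int u0 cpos c])
  have bip: "S0 \<union> S1 = {..DIM('a)}" "S0 \<inter> S1 = {}"
    "\<forall>i\<in>S0. \<forall>j\<in>S0. (i, j) \<notin> diagram_edges u" "\<forall>i\<in>S1. \<forall>j\<in>S1. (i, j) \<notin> diagram_edges u"
    using assms(4) by (auto simp: diagram_bipartition_def atLeast0AtMost)
  have inN: "k \<le> DIM('a)" if "k \<in> S0 \<or> k \<in> S1" for k
  proof -
    have "k \<in> {..DIM('a)}" using that bip(1) by blast
    thus ?thesis by simp
  qed
  have fS0: "finite S0" and fS1: "finite S1" using bip(1) by (metis finite_Un finite_atMost)+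
  have uu: "u k \<bullet> u k = 1" if "k \<le> DIM('a)" for k
    using unit that by (metis inner_commute norm_eq_1 power2_norm_eq_inner)
  have dot_self: "u j \<bullet> (\<Sum>k\<in>S. \<beta> k *\<^sub>R u k) = \<beta> j"
    if S: "S = S0 \<or> S = S1" and j: "j \<in> S" for S \<beta> j
  proof -
    have fS: "finite S" using S fS0 fS1 by auto
    have jn: "j \<le> DIM('a)" using S j inN by auto
    have "u j \<bullet> (\<Sum>k\<in>S. \<beta> k *\<^sub>R u k) = (\<Sum>k\<in>S. \<beta> k * (u j \<bullet> u k))"
      by (simp add: inner_sum_right)
    also have "\<dots> = (\<Sum>k\<in>S. if k = j then \<beta> k else 0)"
    proof (rule sum.cong)
      fix k assume k: "k \<in> S"
      have kn: "k \<le> DIM('a)" using S k inN by auto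
      show "\<beta> k * (u j \<bullet> u k) = (if k = j then \<beta> k else 0)"
      proof (cases "k = j")
        case True thus ?thesis using uu[OF kn] by simp
      next
        case False
        have "(j, k) \<notin> diagram_edges u" using bip S j k by auto
        hence "u j \<bullet> u k = 0" using orth_cox[OF cs _ jn kn] False by auto
        thus ?thesis using False by simp
      qed
    qed simp
    also have "\<dots> = \<beta> j" using fS j by simp
    finally show ?thesis .
  qed
  define W0 where "W0 = {x. \<forall>i\<in>S0. u i \<bullet> x = b i}"
  define W1 where "W1 = {x. \<forall>i\<in>S1. u i \<bullet> x = b i}"
  have x0W: "x0 \<in> W0" using assms(5) aff_sub[of u b S0] unfolding W0_def by blast
  have x1W: "x1 \<in> W1" using assms(6) aff_sub[of u b S1] unfolding W1_def by blast
  have allW: False if "\<forall>k\<le>DIM('a). u k \<bullet> x = b k" for x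
  proof -
    have "(\<Sum>k\<le>DIM('a). c k * (b k - u k \<bullet> x)) = 0" using that by simp
    thus False using identity[OF c, of b x] C by simp
  qed
  have S1ne: "S1 \<noteq> {}"
  proof
    assume "S1 = {}"
    hence "S0 = {..DIM('a)}" using bip by simp
    thus False using allW[of x0] x0W unfolding W0_def by auto
  qed
  have S0ne: "S0 \<noteq> {}"
  proof
    assume "S0 = {}"
    hence "S1 = {..DIM('a)}" using bip by simp
    thus False using allW[of x1] x1W unfolding W1_def by auto
  qed
  have W0sub: "W0 \<subseteq> affine hull (bipartite_face u b S0)"
    unfolding W0_def by (rule W_sub_aff[OF bnd nonemp cpos c C bip(1,2) S1ne])
  have W1sub: "W1 \<subseteq> affine hull (bipartite_face u b S1)"
    unfolding W1_def by (rule W_sub_aff[OF bnd nonemp cpos c C _ _ S0ne]) (use bip(1,2) in auto)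
  have foc0: "\<forall>d. (\<forall>i\<in>S0. u i \<bullet> d = 0) \<longrightarrow> (x0 - x1) \<bullet> d = 0"
  proof (intro allI impI)
    fix d assume d: "\<forall>i\<in>S0. u i \<bullet> d = 0"
    have "\<forall>t::real. norm (x0 - x1) \<le> norm ((x0 - x1) + t *\<^sub>R d)"
    proof
      fix t :: real
      have "x0 + t *\<^sub>R d \<in> W0" using x0W d unfolding W0_def by (simp add: inner_add_right)
      hence "x0 + t *\<^sub>R d \<in> affine hull (bipartite_face u b S0)" using W0sub by blast
      hence "dist x0 x1 \<le> dist (x0 + t *\<^sub>R d) x1" using assms(7) assms(6) by blast
      moreover have "x0 + t *\<^sub>R d - x1 = (x0 - x1) + t *\<^sub>R d" by simp
      ultimately show "norm (x0 - x1) \<le> norm ((x0 - x1) + t *\<^sub>R d)" by (simp add: dist_norm)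
    qed
    thus "(x0 - x1) \<bullet> d = 0" by (rule foc)
  qed
  have foc1: "\<forall>d. (\<forall>i\<in>S1. u i \<bullet> d = 0) \<longrightarrow> (x0 - x1) \<bullet> d = 0"
  proof (intro allI impI)
    fix d assume d: "\<forall>i\<in>S1. u i \<bullet> d = 0"
    have "\<forall>t::real. norm (x0 - x1) \<le> norm ((x0 - x1) + t *\<^sub>R d)"
    proof
      fix t :: real
      have "x1 + (- t) *\<^sub>R d \<in> W1" using x1W d unfolding W1_def by (simp add: inner_add_right inner_diff_right)
      hence "x1 + (- t) *\<^sub>R d \<in> affine hull (bipartite_face u b S1)" using W1sub by blast
      hence "dist x0 x1 \<le> dist x0 (x1 + (- t) *\<^sub>R d)" using assms(7) assms(5) by blast
      moreover have "dist x0 (x1 + (- t) *\<^sub>R d) = norm ((x0 - x1) + t *\<^sub>R d)"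
        unfolding dist_norm by (simp add: algebra_simps)
      moreover have "dist x0 x1 = norm (x0 - x1)" by (simp add: dist_norm)
      ultimately show "norm (x0 - x1) \<le> norm ((x0 - x1) + t *\<^sub>R d)" by linarith
    qed
    thus "(x0 - x1) \<bullet> d = 0" by (rule foc)
  qed
  obtain \<alpha> where \<alpha>: "x0 - x1 = (\<Sum>i\<in>S0. \<alpha> i *\<^sub>R u i)"
    using span_indexed[OF fS0 orth_span[OF foc0]] by blast
  obtain \<beta> where \<beta>: "x0 - x1 = (\<Sum>i\<in>S1. \<beta> i *\<^sub>R u i)"
    using span_indexed[OF fS1 orth_span[OF foc1]] by blast
  have a_eq: "u i \<bullet> (x0 - x1) = \<alpha> i" if "i \<in> S0" for i
    unfolding \<alpha> by (rule dot_self) (use that in auto)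
  have b_eq: "u j \<bullet> (x0 - x1) = \<beta> j" if "j \<in> S1" for j
    unfolding \<beta> by (rule dot_self) (use that in auto)
  define d where "d k = (if k \<in> S0 then \<alpha> k else - \<beta> k)" for k
  have dsum: "(\<Sum>k\<le>DIM('a). d k *\<^sub>R u k) = 0"
  proof -
    have "(\<Sum>k\<le>DIM('a). d k *\<^sub>R u k) = (\<Sum>k\<in>S0 \<union> S1. d k *\<^sub>R u k)" using bip(1) by simp
    also have "\<dots> = (\<Sum>k\<in>S0. d k *\<^sub>R u k) + (\<Sum>k\<in>S1. d k *\<^sub>R u k)"
      by (rule sum.union_disjoint[OF fS0 fS1 bip(2)])
    also have "(\<Sum>k\<in>S0. d k *\<^sub>R u k) = (\<Sum>k\<in>S0. \<alpha> k *\<^sub>R u k)"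
      by (rule sum.cong) (auto simp: d_def)
    also have "(\<Sum>k\<in>S1. d k *\<^sub>R u k) = (\<Sum>k\<in>S1. - (\<beta> k *\<^sub>R u k))"
      using bip(2) by (intro sum.cong) (auto simp: d_def)
    also have "\<dots> = - (\<Sum>k\<in>S1. \<beta> k *\<^sub>R u k)" by (rule sum_negf)
    finally show ?thesis using \<alpha> \<beta> by simp
  qed
  obtain l where l: "\<forall>k\<le>DIM('a). d k = l * c k" using kernel[OF bnd nonemp cpos c dsum] by blast
  have phi0: "b k - u k \<bullet> x0 = (if k \<in> S1 then l * c k else 0)" if k: "k \<le> DIM('a)" for k
  proof (cases "k \<in> S1")
    case True
    hence "k \<notin> S0" using bip(2) by blast
    have "u k \<bullet> x1 = b k" using x1W True unfolding W1_def by blast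
    moreover have "u k \<bullet> (x0 - x1) = \<beta> k" using b_eq True by blast
    moreover have "d k = - \<beta> k" using \<open>k \<notin> S0\<close> by (simp add: d_def)
    ultimately show ?thesis using True l k by (simp add: inner_diff_right)
  next
    case False
    hence "k \<in> S0" using bip(1) k by auto
    thus ?thesis using x0W False unfolding W0_def by simp
  qed
  have phi1: "b k - u k \<bullet> x1 = (if k \<in> S0 then l * c k else 0)" if k: "k \<le> DIM('a)" for k
  proof (cases "k \<in> S0")
    case True
    have "u k \<bullet> x0 = b k" using x0W True unfolding W0_def by blast
    moreover have "u k \<bullet> (x0 - x1) = \<alpha> k" using a_eq True by blast
    moreover have "d k = \<alpha> k" using True by (simp add: d_def)
    ultimately show ?thesis using True l k by (simp add: inner_diff_right)
  next
    case False
    hence "k \<in> S1" using bip(1) k by auto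
    thus ?thesis using x1W False unfolding W1_def by simp
  qed
  have "(\<Sum>k\<le>DIM('a). c k * b k) = (\<Sum>k\<le>DIM('a). c k * (b k - u k \<bullet> x0))"
    using identity[OF c] by simp
  also have "\<dots> = l * (\<Sum>k\<le>DIM('a). if k \<in> S1 then c k * c k else 0)"
    unfolding sum_distrib_left by (rule sum.cong) (auto simp: phi0)
  finally have Cl: "(\<Sum>k\<le>DIM('a). c k * b k) = l * (\<Sum>k\<le>DIM('a). if k \<in> S1 then c k * c k else 0)" .
  have Q: "(\<Sum>k\<le>DIM('a). if k \<in> S1 then c k * c k else 0) \<ge> 0" by (intro sum_nonneg) auto
  have l0: "l > 0"
  proof (rule ccontr)
    assume "\<not> l > 0"
    hence "l * (\<Sum>k\<le>DIM('a). if k \<in> S1 then c k * c k else 0) \<le> 0"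
      using Q by (simp add: mult_nonpos_nonneg)
    thus False using C Cl by linarith
  qed
  have s0: "u j \<bullet> x0 < b j" if "j \<in> S1" for j
  proof -
    have jn: "j \<le> DIM('a)" using that inN by auto
    have "l * c j > 0" using l0 cpos jn by simp
    thus ?thesis using phi0[OF jn] that by simp
  qed
  have s1: "u i \<bullet> x1 < b i" if "i \<in> S0" for i
  proof -
    have jn: "i \<le> DIM('a)" using that inN by auto
    have "l * c i > 0" using l0 cpos jn by simp
    thus ?thesis using phi1[OF jn] that by simp
  qed
  have r0: "x0 \<in> rel_interior (bipartite_face u b S0)"
    by (rule relint[OF bip(1)]) (use x0W s0 in \<open>auto simp: W0_def\<close>)
  have r1: "x1 \<in> rel_interior (bipartite_face u b S1)"
    by (rule relint[of S1 S0]) (use x1W s1 bip(1) in \<open>auto simp: W1_def\<close>)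
  define m where "m = x0 + (1/2) *\<^sub>R (x1 - x0)"
  let ?O = "\<Inter>k\<in>{..DIM('a)}. {y. u k \<bullet> y < b k}"
  have mk: "u k \<bullet> m < b k" if k: "k \<le> DIM('a)" for k
  proof -
    have "u k \<bullet> m = u k \<bullet> x0 + (1/2) * (u k \<bullet> x1 - u k \<bullet> x0)"
      by (simp add: m_def inner_add_right inner_diff_right)
    hence m2: "2 * (u k \<bullet> m) = u k \<bullet> x0 + u k \<bullet> x1" by (simp add: algebra_simps)
    have "k \<in> S0 \<or> k \<in> S1" using k bip(1) by auto
    then show ?thesis
    proof
      assume kS: "k \<in> S0"
      hence "u k \<bullet> x0 = b k" "u k \<bullet> x1 < b k" using x0W s1 unfolding W0_def by auto
      thus ?thesis using m2 by linarith
    next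
      assume kS: "k \<in> S1"
      hence "u k \<bullet> x1 = b k" "u k \<bullet> x0 < b k" using x1W s0 unfolding W1_def by auto
      thus ?thesis using m2 by linarith
    qed
  qed
  have mO: "m \<in> ?O" using mk by auto
  have "open ?O" by (intro open_INT) (auto intro: open_halfspace_lt)
  moreover have "?O \<subseteq> simplex_of u b" by (auto simp: simplex_of_def intro: less_imp_le)
  ultimately have "?O \<subseteq> interior (simplex_of u b)" by (rule interior_maximal[rotated])
  hence "m \<in> interior (simplex_of u b)" using mO by blast
  thus ?thesis using r0 r1 unfolding m_def by blast
qed

end
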